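(* Assume $\mu(\partial A)=0$ for every $\sigma$-invariant probability measure $\mu$. Then for every $v>0$ there exists $M=M(v)$ such that for every $m\ge M$, $$\Phi_{\mathcal{D}_m}(v):=\lim_{n\to\infty}\frac1n\log\mu_\phi\left\{\frac{r_{\mathcal{D}_m}^n}{n}\le v\right\}=-\infty.$$
   Context: $(\Sigma,\sigma)$ is a two-sided mixing subshift of finite type on $\{1,\dots,N\}$, $\phi:\Sigma\to\mathbb{R}$ Hölder continuous with unique equilibrium state $\mu_\phi$. $A\subset\Sigma$ is an open set, $\partial A=\overline A\cap\overline{\Sigma\setminus A}$. An $m$-cylinder is $\{x:x_j=i_j,\ -m\le j\le m\}$; $\mathcal{B}_m$ (resp. $\mathcal{C}_m$) is the largest (resp. smallest) union of $m$-cylinders contained in (resp. containing) $A$; $\mathcal{D}_m=\mathcal{C}_m\setminus\mathcal{B}_m$. For $D\subset\Sigma$, $r_D(x)$ is the smallest integer $n\ge1$ with $\sigma^nx\in D$ ($+\infty$ if none), $r_D^1=r_D$, $r_D^{n+1}=r_D^n+r_D\circ\sigma^{r_D^n}$. The claim includes that the limit exists and equals $-\infty$. *)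

theory Defs
  imports "HOL-Probability.Probability"
begin

text \<open>Points of the full shift: bi-infinite sequences int => nat, with the product
 (Tychonoff) topology on int => nat (nat carries the discrete topology).\<close>

type_synonym seq = "int \<Rightarrow> nat"

definition shift :: "seq \<Rightarrow> seq" where
  "shift x = (\<lambda>j. x (j + 1))"

definition SFT :: "nat \<Rightarrow> (nat \<Rightarrow> nat \<Rightarrow> bool) \<Rightarrow> seq set" where
  "SFT N T = {x. \<forall>j. x j \<in> {1..N} \<and> T (x j) (x (j + 1))}"

text \<open>Mixing (T primitive): some power T^n, and hence all larger ones, is positive.\<close>
definition mixing_matrix :: "nat \<Rightarrow> (nat \<Rightarrow> nat \<Rightarrow> bool) \<Rightarrow> bool" where
  "mixing_matrix N T \<longleftrightarrow> (\<exists>K. \<forall>a\<in>{1..N}. \<forall>b\<in>{1..N}. \<forall>n\<ge>K.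
     \<exists>w::nat \<Rightarrow> nat. w 0 = a \<and> w n = b \<and> (\<forall>k\<le>n. w k \<in> {1..N})
        \<and> (\<forall>k<n. T (w k) (w (k + 1))))"

definition sdist :: "seq \<Rightarrow> seq \<Rightarrow> real" where
  "sdist x y = (if x = y then 0
     else 2 powr (- real (LEAST n::nat. \<exists>j. nat \<bar>j\<bar> = n \<and> x j \<noteq> y j)))"

definition holder_on :: "seq set \<Rightarrow> (seq \<Rightarrow> real) \<Rightarrow> bool" where
  "holder_on S \<phi> \<longleftrightarrow> (\<exists>C \<alpha>. \<alpha> > 0 \<and>
     (\<forall>x\<in>S. \<forall>y\<in>S. \<bar>\<phi> x - \<phi> y\<bar> \<le> C * sdist x y powr \<alpha>))"

definition borel_prob_on :: "seq set \<Rightarrow> seq measure \<Rightarrow> bool" where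
  "borel_prob_on S \<mu> \<longleftrightarrow> prob_space \<mu> \<and> sets \<mu> = sets (restrict_space borel S)"

definition invariant_prob :: "seq set \<Rightarrow> seq measure \<Rightarrow> bool" where
  "invariant_prob S \<mu> \<longleftrightarrow> borel_prob_on S \<mu> \<and>
     (\<forall>B\<in>sets \<mu>. emeasure \<mu> (shift -` B \<inter> space \<mu>) = emeasure \<mu> B)"

definition part_H :: "seq measure \<Rightarrow> (seq \<Rightarrow> 'b) \<Rightarrow> real" where
  "part_H \<mu> \<eta> = - (\<Sum>a\<in>\<eta> ` space \<mu>.
       measure \<mu> (\<eta> -` {a} \<inter> space \<mu>) * ln (measure \<mu> (\<eta> -` {a} \<inter> space \<mu>)))"

definition join_part :: "(seq \<Rightarrow> nat) \<Rightarrow> nat \<Rightarrow> seq \<Rightarrow> nat list" where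
  "join_part \<xi> n x = map (\<lambda>i. \<xi> ((shift ^^ i) x)) [0..<n]"

definition entropy_part :: "seq measure \<Rightarrow> (seq \<Rightarrow> nat) \<Rightarrow> real" where
  "entropy_part \<mu> \<xi> = lim (\<lambda>n. part_H \<mu> (join_part \<xi> n) / real n)"

definition finite_partitions :: "seq measure \<Rightarrow> (seq \<Rightarrow> nat) set" where
  "finite_partitions \<mu> = {\<xi>. \<xi> \<in> measurable \<mu> (count_space UNIV) \<and> finite (\<xi> ` space \<mu>)}"

definition ks_entropy :: "seq measure \<Rightarrow> ereal" where
  "ks_entropy \<mu> = (SUP \<xi>\<in>finite_partitions \<mu>. ereal (entropy_part \<mu> \<xi>))"

definition equilibrium_state :: "seq set \<Rightarrow> (seq \<Rightarrow> real) \<Rightarrow> seq measure \<Rightarrow> bool" where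
  "equilibrium_state S \<phi> \<mu> \<longleftrightarrow> invariant_prob S \<mu> \<and>
     (\<forall>\<nu>. invariant_prob S \<nu> \<longrightarrow>
        ks_entropy \<nu> + ereal (integral\<^sup>L \<nu> \<phi>) \<le> ks_entropy \<mu> + ereal (integral\<^sup>L \<mu> \<phi>))"

definition cyl :: "seq set \<Rightarrow> nat \<Rightarrow> seq \<Rightarrow> seq set" where
  "cyl S m x = {y\<in>S. \<forall>j. \<bar>j\<bar> \<le> int m \<longrightarrow> y j = x j}"

definition inner_cyl :: "seq set \<Rightarrow> seq set \<Rightarrow> nat \<Rightarrow> seq set" where
  "inner_cyl S A m = \<Union>{cyl S m x | x. x \<in> S \<and> cyl S m x \<subseteq> A}"

definition outer_cyl :: "seq set \<Rightarrow> seq set \<Rightarrow> nat \<Rightarrow> seq set" where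
  "outer_cyl S A m = \<Union>{cyl S m x | x. x \<in> S \<and> cyl S m x \<inter> A \<noteq> {}}"

definition diff_cyl :: "seq set \<Rightarrow> seq set \<Rightarrow> nat \<Rightarrow> seq set" where
  "diff_cyl S A m = outer_cyl S A m - inner_cyl S A m"

text \<open>First return/hitting time r_D (infinity if none) and its iterates;
 ret_iter D (Suc n) is r_D^(n+1), ret_iter D 1 = r_D.\<close>
definition ret :: "seq set \<Rightarrow> seq \<Rightarrow> enat" where
  "ret D x = (if \<exists>n\<ge>1. (shift ^^ n) x \<in> D
      then enat (LEAST n. n \<ge> 1 \<and> (shift ^^ n) x \<in> D) else \<infinity>)"

primrec ret_iter :: "seq set \<Rightarrow> nat \<Rightarrow> seq \<Rightarrow> enat" where
  "ret_iter D 0 x = 0"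
| "ret_iter D (Suc n) x = (case ret_iter D n x of
      \<infinity> \<Rightarrow> \<infinity> | enat k \<Rightarrow> enat k + ret D ((shift ^^ k) x))"

definition log_rate :: "seq measure \<Rightarrow> seq set \<Rightarrow> real \<Rightarrow> nat \<Rightarrow> ereal" where
  "log_rate \<mu> D v n =
     (let p = measure \<mu> {x\<in>space \<mu>. \<exists>k. ret_iter D n x = enat k \<and> real k / real n \<le> v}
      in if p = 0 then -\<infinity> else ereal (ln p / real n))"

end

theory Submission
  imports Defs "HOL-Analysis.Function_Metric" "HOL-Probability.Projective_Limit" "HOL-Probability.Discrete_Topology"
begin

lemma bounded_subseq:
  fixes f :: "nat \<Rightarrow> 'c::countable \<Rightarrow> real"
  assumes "\<And>n c. f n c \<in> {0..1}"
  shows "\<exists>r. strict_mono r \<and> (\<forall>c. convergent (\<lambda>n. f (r n) c))"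
proof -
  define K where "K = (Pi\<^sub>E UNIV (\<lambda>_::'c. {0..1::real}))"
  have "compactin (product_topology (\<lambda>_. euclidean) UNIV) K"
    unfolding K_def compactin_PiE by (auto simp: compactin_euclidean_iff)
  then have "compact K" by (simp add: euclidean_product_topology compactin_euclidean_iff)
  then have sc: "seq_compact K" by (rule compact_imp_seq_compact)
  have "\<forall>n. f n \<in> K" using assms by (auto simp: K_def)
  from seq_compactE[OF sc this] obtain l r where lr: "strict_mono r" "(f \<circ> r) \<longlonglongrightarrow> l" by blast
  have "(\<lambda>n. f (r n) c) \<longlonglongrightarrow> l c" for c
    using continuous_on_tendsto_compose[OF continuous_on_product_coordinates[of c] lr(2)]
    by (simp add: o_def)
  then show ?thesis using lr(1) by (auto simp: convergent_def)
qed

lemma card_split: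
  assumes "finite A" "finite U"
  shows "card {t\<in>A. g t \<in> U} = (\<Sum>u\<in>U. card {t\<in>A. g t = u})"
proof -
  have "{t\<in>A. g t \<in> U} = (\<Union>u\<in>U. {t\<in>A. g t = u})" by auto
  moreover have "card (\<Union>u\<in>U. {t\<in>A. g t = u}) = (\<Sum>u\<in>U. card {t\<in>A. g t = u})"
    using assms by (intro card_UN_disjoint) auto
  ultimately show ?thesis by simp
qed

locale kb =
  fixes \<Sigma>0 :: "'a::{countable,polish_space} set" and x :: "nat \<Rightarrow> int \<Rightarrow> 'a" and L :: "nat \<Rightarrow> nat"
  assumes fin: "finite \<Sigma>0" and xin: "\<And>j i. x j i \<in> \<Sigma>0" and L1: "\<And>j. 1 \<le> L j" and Lj: "\<And>j. j \<le> L j"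
begin

definition freq :: "nat \<Rightarrow> ((int \<Rightarrow> 'a) \<Rightarrow> bool) \<Rightarrow> real" where
  "freq j Q = real (card {t\<in>{1..L j}. Q (\<lambda>i. x j (i + int t))}) / real (L j)"

definition W :: "int set \<Rightarrow> (int \<Rightarrow> 'a) set" where
  "W J = Pi\<^sub>E J (\<lambda>_. \<Sigma>0)"

lemma finite_W: "finite J \<Longrightarrow> finite (W J)"
  unfolding W_def using fin by (intro finite_PiE) auto

lemma restrict_in_W: "restrict (\<lambda>i. x j (i + int t)) J \<in> W J"
  unfolding W_def using xin by auto

lemma freq01: "freq j Q \<in> {0..1}"
proof -
  have "card {t\<in>{1..L j}. Q (\<lambda>i. x j (i + int t))} \<le> card {1..L j}" by (intro card_mono) auto
  then show ?thesis using L1[of j] by (auto simp: freq_def divide_le_eq_1)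
qed

lemma freq_True: "freq j (\<lambda>_. True) = 1"
proof -
  have "{t\<in>{1..L j}. True} = {1..L j}" by auto
  then show ?thesis using L1[of j] by (simp add: freq_def)
qed

definition e :: "nat \<Rightarrow> (int \<times> 'a) list \<Rightarrow> real" where
  "e j c = freq j (\<lambda>y. \<forall>(i,s)\<in>set c. y i = s)"

definition r :: "nat \<Rightarrow> nat" where
  "r = (SOME r. strict_mono r \<and> (\<forall>c. convergent (\<lambda>n. e (r n) c)))"

lemma r_props: "strict_mono r" "\<And>c. convergent (\<lambda>n. e (r n) c)"
proof -
  have "\<exists>r. strict_mono r \<and> (\<forall>c. convergent (\<lambda>n. e (r n) c))"
    by (rule bounded_subseq) (unfold e_def, rule freq01)
  then have "strict_mono r \<and> (\<forall>c. convergent (\<lambda>n. e (r n) c))"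
    unfolding r_def by (rule someI_ex)
  then show "strict_mono r" "\<And>c. convergent (\<lambda>n. e (r n) c)" by auto
qed

definition wt :: "int set \<Rightarrow> (int \<Rightarrow> 'a) \<Rightarrow> real" where
  "wt J u = lim (\<lambda>n. freq (r n) (\<lambda>y. restrict y J = u))"

lemma conv_wt:
  assumes "finite J"
  shows "(\<lambda>n. freq (r n) (\<lambda>y. restrict y J = u)) \<longlonglongrightarrow> wt J u"
proof -
  have "convergent (\<lambda>n. freq (r n) (\<lambda>y. restrict y J = u))"
  proof (cases "u \<in> extensional J")
    case True
    obtain c where c: "set c = (\<lambda>i. (i, u i)) ` J" using finite_list[of "(\<lambda>i. (i, u i)) ` J"] assms by (meson finite_imageI)
    have "(\<forall>(i,s)\<in>set c. y i = s) \<longleftrightarrow> restrict y J = u" for y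
    proof -
      have "(\<forall>(i,s)\<in>set c. y i = s) \<longleftrightarrow> (\<forall>i\<in>J. y i = u i)" unfolding c by simp
      also have "\<dots> \<longleftrightarrow> restrict y J = u"
      proof
        assume h: "\<forall>i\<in>J. y i = u i"
        show "restrict y J = u"
        proof
          fix i show "restrict y J i = u i"
            using h extensional_arb[OF True, of i] by (cases "i \<in> J") auto
        qed
      next
        assume "restrict y J = u"
        then show "\<forall>i\<in>J. y i = u i" by (metis restrict_apply')
      qed
      finally show ?thesis .
    qed
    then have "(\<lambda>n. freq (r n) (\<lambda>y. restrict y J = u)) = (\<lambda>n. e (r n) c)"
      unfolding e_def by simp
    then show ?thesis using r_props(2) by simp
  next
    case False
    then have "\<And>y. restrict y J \<noteq> u" by auto
    then have "(\<lambda>n. freq (r n) (\<lambda>y. restrict y J = u)) = (\<lambda>n. 0)"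
      by (simp add: freq_def)
    then show ?thesis by (simp add: convergent_const)
  qed
  then show ?thesis unfolding wt_def by (simp add: convergent_LIMSEQ_iff)
qed

lemma wt_nonneg: "finite J \<Longrightarrow> 0 \<le> wt J u"
  by (rule LIMSEQ_le_const[OF conv_wt]) (use freq01 in auto)

lemma freq_sum:
  assumes "finite J"
  shows "freq j (\<lambda>y. \<Phi> (restrict y J)) = (\<Sum>u\<in>{u\<in>W J. \<Phi> u}. freq j (\<lambda>y. restrict y J = u))"
proof -
  have "{t\<in>{1..L j}. \<Phi> (restrict (\<lambda>i. x j (i + int t)) J)} =
        {t\<in>{1..L j}. restrict (\<lambda>i. x j (i + int t)) J \<in> {u\<in>W J. \<Phi> u}}"
    using restrict_in_W by auto
  then have "card {t\<in>{1..L j}. \<Phi> (restrict (\<lambda>i. x j (i + int t)) J)} =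
     (\<Sum>u\<in>{u\<in>W J. \<Phi> u}. card {t\<in>{1..L j}. restrict (\<lambda>i. x j (i + int t)) J = u})"
    using card_split[of "{1..L j}" "{u\<in>W J. \<Phi> u}"] finite_W[OF assms] by simp
  then show ?thesis unfolding freq_def by (simp add: sum_divide_distrib)
qed

lemma freq_lim:
  assumes "finite J"
  shows "(\<lambda>n. freq (r n) (\<lambda>y. \<Phi> (restrict y J))) \<longlonglongrightarrow> (\<Sum>u\<in>{u\<in>W J. \<Phi> u}. wt J u)"
  unfolding freq_sum[OF assms] by (intro tendsto_sum conv_wt assms)

definition P :: "int set \<Rightarrow> (int \<Rightarrow> 'a) measure" where
  "P J = distr (point_measure (W J) (\<lambda>u. ennreal (wt J u))) (PiM J (\<lambda>_. borel)) (\<lambda>u. u)"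

lemma sets_P: "sets (P J) = sets (PiM J (\<lambda>_. borel))"
  by (simp add: P_def)

lemma W_space: "W J \<subseteq> space (PiM J (\<lambda>_. borel))"
  by (auto simp: W_def space_PiM)

lemma emeasure_P:
  assumes "finite J" "X \<in> sets (PiM J (\<lambda>_. borel))"
  shows "emeasure (P J) X = ennreal (\<Sum>u\<in>{u\<in>W J. u \<in> X}. wt J u)"
proof -
  have "emeasure (P J) X = emeasure (point_measure (W J) (\<lambda>u. ennreal (wt J u))) (X \<inter> W J)"
    unfolding P_def using assms W_space
    by (subst emeasure_distr) (auto simp: space_point_measure Int_commute)
  also have "\<dots> = (\<Sum>u\<in>X \<inter> W J. ennreal (wt J u))"
    using finite_W[OF assms(1)] by (intro emeasure_point_measure_finite) auto
  also have "\<dots> = ennreal (\<Sum>u\<in>X \<inter> W J. wt J u)"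
    using wt_nonneg[OF assms(1)] by (intro sum_ennreal) auto
  also have "X \<inter> W J = {u\<in>W J. u \<in> X}" by auto
  finally show ?thesis .
qed

lemma P_proj:
  assumes JH: "J \<subseteq> H" and fH: "finite H"
  shows "P J = distr (P H) (PiM J (\<lambda>_. borel)) (\<lambda>f. restrict f J)"
proof (rule measure_eqI)
  have fJ: "finite J" using JH fH finite_subset by blast
  show "sets (P J) = sets (distr (P H) (PiM J (\<lambda>_. borel)) (\<lambda>f. restrict f J))"
    by (simp add: sets_P)
  fix X assume X: "X \<in> sets (P J)"
  then have XJ: "X \<in> sets (PiM J (\<lambda>_. borel))" by (simp add: sets_P)
  have meas: "(\<lambda>f. restrict f J) \<in> measurable (P H) (PiM J (\<lambda>_. borel))"
    using measurable_restrict_subset[OF JH] by (simp add: measurable_cong_sets[OF sets_P refl])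
  define Y where "Y = (\<lambda>f. restrict f J) -` X \<inter> space (PiM H (\<lambda>_. borel))"
  have YH: "Y \<in> sets (PiM H (\<lambda>_. borel))"
    unfolding Y_def using measurable_restrict_subset[OF JH] XJ by (rule measurable_sets)
  have sp: "space (P H) = space (PiM H (\<lambda>_. borel))" by (simp add: P_def)
  have "emeasure (distr (P H) (PiM J (\<lambda>_. borel)) (\<lambda>f. restrict f J)) X = emeasure (P H) Y"
    using emeasure_distr[OF meas XJ] sp unfolding Y_def by simp
  also have "\<dots> = ennreal (\<Sum>u\<in>{u\<in>W H. u \<in> Y}. wt H u)" by (rule emeasure_P[OF fH YH])
  finally have eq1: "emeasure (distr (P H) (PiM J (\<lambda>_. borel)) (\<lambda>f. restrict f J)) X
      = ennreal (\<Sum>u\<in>{u\<in>W H. u \<in> Y}. wt H u)" .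
  have l1: "(\<lambda>n. freq (r n) (\<lambda>y. restrict y H \<in> Y)) \<longlonglongrightarrow> (\<Sum>u\<in>{u\<in>W H. u \<in> Y}. wt H u)"
    using freq_lim[OF fH, of "\<lambda>u. u \<in> Y"] by simp
  have l2: "(\<lambda>n. freq (r n) (\<lambda>y. restrict y J \<in> X)) \<longlonglongrightarrow> (\<Sum>u\<in>{u\<in>W J. u \<in> X}. wt J u)"
    using freq_lim[OF fJ, of "\<lambda>u. u \<in> X"] by simp
  have "\<And>y. restrict y H \<in> Y \<longleftrightarrow> restrict y J \<in> X"
    unfolding Y_def using JH by (auto simp: space_PiM restrict_restrict Int_absorb1)
  then have "(\<Sum>u\<in>{u\<in>W H. u \<in> Y}. wt H u) = (\<Sum>u\<in>{u\<in>W J. u \<in> X}. wt J u)"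
    using LIMSEQ_unique[OF l1] l2 by simp
  then show "emeasure (P J) X = emeasure (distr (P H) (PiM J (\<lambda>_. borel)) (\<lambda>f. restrict f J)) X"
    using eq1 emeasure_P[OF fJ XJ] by simp
qed

lemma P_prob:
  assumes "finite J"
  shows "prob_space (P J)"
proof
  have sp: "space (P J) = space (PiM J (\<lambda>_. borel))" by (simp add: P_def)
  have "emeasure (P J) (space (P J)) = ennreal (\<Sum>u\<in>{u\<in>W J. u \<in> space (PiM J (\<lambda>_. borel))}. wt J u)"
    unfolding sp by (rule emeasure_P[OF assms]) simp
  also have "{u\<in>W J. u \<in> space (PiM J (\<lambda>_. borel))} = {u\<in>W J. True}" using W_space by auto
  also have "(\<Sum>u\<in>{u\<in>W J. True}. wt J u) = 1"
  proof -
    have "(\<lambda>n. freq (r n) (\<lambda>y. (\<lambda>_. True) (restrict y J))) \<longlonglongrightarrow> (\<Sum>u\<in>{u\<in>W J. True}. wt J u)"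
      by (rule freq_lim[OF assms])
    moreover have "(\<lambda>n. freq (r n) (\<lambda>y. (\<lambda>_. True) (restrict y J))) \<longlonglongrightarrow> 1"
      by (simp add: freq_True)
    ultimately show ?thesis using LIMSEQ_unique by blast
  qed
  finally show "emeasure (P J) (space (P J)) = 1" by simp
qed

end

definition sh :: "(int \<Rightarrow> 'a) \<Rightarrow> (int \<Rightarrow> 'a)" where
  "sh y = (\<lambda>i. y (i + 1))"

lemma singleton_PiM:
  fixes u :: "int \<Rightarrow> 'a::{countable,t1_space}"
  assumes "finite J" "u \<in> extensional J"
  shows "{u} \<in> sets (PiM J (\<lambda>_. borel))"
proof -
  have "{u} = Pi\<^sub>E J (\<lambda>i. {u i})" using assms(2)
    by (auto simp: PiE_iff extensional_def fun_eq_iff) metis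
  also have "\<dots> \<in> sets (PiM J (\<lambda>_. borel))"
    using assms(1) by (intro sets_PiM_I_finite) auto
  finally show ?thesis .
qed

lemma countable_set_PiM:
  fixes X :: "(int \<Rightarrow> 'a::{countable,t1_space}) set"
  assumes "finite J" "X \<subseteq> space (PiM J (\<lambda>_. borel))"
  shows "X \<in> sets (PiM J (\<lambda>_. borel))"
proof -
  have cX: "countable X"
    using countable_PiE[OF assms(1), of "\<lambda>_. UNIV::'a set"] assms(2)
    by (auto simp: space_PiM intro: countable_subset)
  have "X = (\<Union>u\<in>X. {u})" by auto
  also have "\<dots> \<in> sets (PiM J (\<lambda>_. borel))"
    using cX assms by (intro sets.countable_UN') (auto intro!: singleton_PiM simp: space_PiM PiE_iff)
  finally show ?thesis .
qed

lemma meas_restrict: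
  fixes \<Phi> :: "(int \<Rightarrow> 'a::{countable,t1_space}) \<Rightarrow> bool"
  assumes "finite J"
  shows "{y. \<Phi> (restrict y J)} \<in> sets (PiM UNIV (\<lambda>_. borel::'a measure))"
proof -
  define X where "X = {u\<in>space (PiM J (\<lambda>_. borel::'a measure)). \<Phi> u}"
  have X: "X \<in> sets (PiM J (\<lambda>_. borel))" unfolding X_def by (rule countable_set_PiM[OF assms]) auto
  have "{y. \<Phi> (restrict y J)} = prod_emb UNIV (\<lambda>_. borel) J X"
    by (auto simp: prod_emb_def X_def space_PiM)
  also have "\<dots> \<in> sets (PiM UNIV (\<lambda>_. borel::'a measure))"
    by (rule measurable_prod_emb[OF subset_UNIV X])
  finally show ?thesis .
qed

lemma card_shift1:
  "card {t\<in>{1..L}. p (Suc t)} \<le> card {t\<in>{1..L::nat}. p t} + 1 \<and>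
   card {t\<in>{1..L}. p t} \<le> card {t\<in>{1..L::nat}. p (Suc t)} + 1"
proof -
  have b: "card {t\<in>{1..L}. p (Suc t)} = card {t\<in>{2..L+1}. p t}"
  proof -
    have "{t\<in>{2..L+1}. p t} = Suc ` {t\<in>{1..L}. p (Suc t)}"
      by (auto simp: image_iff) (metis Suc_le_D Suc_le_mono add.commute add_0 le_add_diff_inverse numeral_2_eq_2 plus_1_eq_Suc)
    then show ?thesis by (simp add: card_image)
  qed
  have c1: "card {t\<in>{2..L+1}. p t} \<le> card {t\<in>{1..L}. p t} + 1"
  proof -
    have "{t\<in>{2..L+1}. p t} \<subseteq> insert (L+1) {t\<in>{1..L}. p t}" by auto
    then have "card {t\<in>{2..L+1}. p t} \<le> card (insert (L+1) {t\<in>{1..L}. p t})"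
      by (intro card_mono) auto
    also have "\<dots> \<le> card {t\<in>{1..L}. p t} + 1" by (simp add: card_insert_le_m1)
    finally show ?thesis .
  qed
  have c2: "card {t\<in>{1..L}. p t} \<le> card {t\<in>{2..L+1}. p t} + 1"
  proof -
    have "{t\<in>{1..L}. p t} \<subseteq> insert 1 {t\<in>{2..L+1}. p t}" by auto
    then have "card {t\<in>{1..L}. p t} \<le> card (insert 1 {t\<in>{2..L+1}. p t})"
      by (intro card_mono) auto
    also have "\<dots> \<le> card {t\<in>{2..L+1}. p t} + 1" by (simp add: card_insert_le_m1)
    finally show ?thesis .
  qed
  show ?thesis using b c1 c2 by simp
qed

context kb begin

definition M0 :: "(int \<Rightarrow> 'a) measure" where
  "M0 = projective_family.lim UNIV P (\<lambda>_. borel)"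

lemma PP: "polish_projective UNIV P"
  unfolding polish_projective_def projective_family_def using P_proj P_prob by blast

lemma M0_prob: "prob_space M0"
proof -
  interpret PL: polish_projective UNIV P by (rule PP)
  show ?thesis unfolding M0_def by (rule PL.P.prob_space_axioms)
qed

lemma sets_M0: "sets M0 = sets (PiM UNIV (\<lambda>_. borel))"
proof -
  interpret PL: polish_projective UNIV P by (rule PP)
  show ?thesis unfolding M0_def by simp
qed

lemma space_M0: "space M0 = UNIV"
proof -
  interpret PL: polish_projective UNIV P by (rule PP)
  show ?thesis unfolding M0_def by (simp add: space_PiM)
qed

lemma M0_emb:
  assumes "finite J" "X \<in> sets (PiM J (\<lambda>_. borel))"
  shows "emeasure M0 (prod_emb UNIV (\<lambda>_. borel) J X) = emeasure (P J) X"
proof -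
  interpret PL: polish_projective UNIV P by (rule PP)
  show ?thesis unfolding M0_def using assms by (intro PL.emeasure_lim_emb) auto
qed

lemma meas_M0: "finite J \<Longrightarrow> {y. \<Phi> (restrict y J)} \<in> sets M0"
  unfolding sets_M0 by (rule meas_restrict)

lemma M0_limW:
  assumes J: "finite J"
  shows "(\<lambda>n. freq (r n) (\<lambda>y. \<Phi> (restrict y J))) \<longlonglongrightarrow> measure M0 {y. restrict y J \<in> W J \<and> \<Phi> (restrict y J)}"
proof -
  interpret prob_space M0 by (rule M0_prob)
  define X where "X = {u\<in>W J. \<Phi> u}"
  have X: "X \<in> sets (PiM J (\<lambda>_. borel))" unfolding X_def
    using W_space by (intro countable_set_PiM[OF J]) auto
  have eqs: "{y. restrict y J \<in> W J \<and> \<Phi> (restrict y J)} = prod_emb UNIV (\<lambda>_. borel) J X"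
    by (auto simp: prod_emb_def X_def space_PiM)
  have "emeasure M0 {y. restrict y J \<in> W J \<and> \<Phi> (restrict y J)} = ennreal (\<Sum>u\<in>{u\<in>W J. u \<in> X}. wt J u)"
    unfolding eqs M0_emb[OF J X] by (rule emeasure_P[OF J X])
  moreover have "{u\<in>W J. u \<in> X} = {u\<in>W J. \<Phi> u}" by (auto simp: X_def)
  ultimately have "measure M0 {y. restrict y J \<in> W J \<and> \<Phi> (restrict y J)} = (\<Sum>u\<in>{u\<in>W J. \<Phi> u}. wt J u)"
    using wt_nonneg[OF J] by (simp add: emeasure_eq_measure sum_nonneg)
  then show ?thesis using freq_lim[OF J] by simp
qed

lemma M0_support: "AE y in M0. \<forall>i. y i \<in> \<Sigma>0"
proof -
  interpret prob_space M0 by (rule M0_prob)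
  have "AE y in M0. y i \<in> \<Sigma>0" for i
  proof -
    have "(\<lambda>n. freq (r n) (\<lambda>y. (\<lambda>_. True) (restrict y {i}))) \<longlonglongrightarrow> measure M0 {y. restrict y {i} \<in> W {i} \<and> True}"
      by (rule M0_limW) simp
    moreover have "(\<lambda>n. freq (r n) (\<lambda>y. (\<lambda>_. True) (restrict y {i}))) \<longlonglongrightarrow> 1"
      by (simp add: freq_True)
    ultimately have "measure M0 {y. restrict y {i} \<in> W {i} \<and> True} = 1" using LIMSEQ_unique by blast
    moreover have "{y. restrict y {i} \<in> W {i} \<and> True} = {y. y i \<in> \<Sigma>0}" by (auto simp: W_def)
    ultimately have "measure M0 {y. y i \<in> \<Sigma>0} = 1" by simp
    then show ?thesis using AE_prob_1[of "{y. y i \<in> \<Sigma>0}"] by simp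
  qed
  then show ?thesis by (simp add: AE_all_countable)
qed

lemma M0_lim:
  assumes J: "finite J"
  shows "(\<lambda>n. freq (r n) (\<lambda>y. \<Phi> (restrict y J))) \<longlonglongrightarrow> measure M0 {y. \<Phi> (restrict y J)}"
proof -
  have "measure M0 {y. \<Phi> (restrict y J)} = measure M0 {y. restrict y J \<in> W J \<and> \<Phi> (restrict y J)}"
  proof (rule measure_eq_AE)
    show "AE y in M0. (y \<in> {y. \<Phi> (restrict y J)}) = (y \<in> {y. restrict y J \<in> W J \<and> \<Phi> (restrict y J)})"
      using M0_support by eventually_elim (auto simp: W_def)
    show "{y. \<Phi> (restrict y J)} \<in> sets M0" by (rule meas_M0[OF J])
    show "{y. restrict y J \<in> W J \<and> \<Phi> (restrict y J)} \<in> sets M0"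
      using meas_M0[OF J, of "\<lambda>u. u \<in> W J \<and> \<Phi> u"] by simp
  qed
  then show ?thesis using M0_limW[OF J] by simp
qed

lemma sh_meas: "sh \<in> measurable M0 M0"
proof -
  have "(\<lambda>\<omega> i. \<omega> (i + 1)) \<in> measurable (PiM UNIV (\<lambda>_. borel::'a measure)) (PiM UNIV (\<lambda>_. borel))"
    by (rule measurable_PiM_single') (auto simp: space_PiM)
  then show ?thesis unfolding sh_def by (simp add: measurable_cong_sets[OF sets_M0 sets_M0])
qed

lemma freq_sh: "\<bar>freq j (\<lambda>y. Q (sh y)) - freq j Q\<bar> \<le> 1 / real (L j)"
proof -
  define p where "p t = Q (\<lambda>i. x j (i + int t))" for t
  have "\<And>t. Q (sh (\<lambda>i. x j (i + int t))) = p (Suc t)"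
    unfolding p_def sh_def by (simp add: algebra_simps)
  then have a: "freq j (\<lambda>y. Q (sh y)) = real (card {t\<in>{1..L j}. p (Suc t)}) / real (L j)"
    by (simp add: freq_def)
  have b: "freq j Q = real (card {t\<in>{1..L j}. p t}) / real (L j)"
    by (simp add: freq_def p_def)
  have "\<bar>real (card {t\<in>{1..L j}. p (Suc t)}) - real (card {t\<in>{1..L j}. p t})\<bar> \<le> 1"
    using card_shift1[of "L j" p] by linarith
  then show ?thesis unfolding a b using L1[of j]
    by (simp add: diff_divide_distrib[symmetric] abs_divide divide_right_mono)
qed

lemma L_r_tendsto: "(\<lambda>n. 1 / real (L (r n))) \<longlonglongrightarrow> 0"
proof -
  have "filterlim (\<lambda>n. real (L (r n))) at_top sequentially"
  proof (rule filterlim_at_top_mono[OF filterlim_real_sequentially])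
    have "\<forall>n. n \<le> L (r n)" using seq_suble[OF r_props(1)] Lj le_trans by blast
    then show "\<forall>\<^sub>F n in sequentially. real n \<le> real (L (r n))" by (simp add: always_eventually)
  qed
  then show ?thesis by (simp add: tendsto_inverse_0_at_top divide_inverse)
qed

lemma M0_shift: "distr M0 M0 sh = M0"
proof (rule measure_eqI_PiM_infinite[where I=UNIV and M="\<lambda>_. borel"])
  interpret prob_space M0 by (rule M0_prob)
  show "sets (distr M0 M0 sh) = sets (PiM UNIV (\<lambda>_. borel))" by (simp add: sets_M0)
  show "sets M0 = sets (PiM UNIV (\<lambda>_. borel))" by (rule sets_M0)
  interpret D: prob_space "distr M0 M0 sh" by (rule prob_space_distr[OF sh_meas])
  show "finite_measure (distr M0 M0 sh)" by (rule D.finite_measure_axioms)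
  fix A :: "int \<Rightarrow> 'a set" and J :: "int set" assume J: "finite J" "J \<subseteq> UNIV" and A: "\<And>i. i \<in> J \<Longrightarrow> A i \<in> sets borel"
  define \<Phi> where "\<Phi> u = (\<forall>i\<in>J. u i \<in> A i)" for u :: "int \<Rightarrow> 'a"
  define J' where "J' = (\<lambda>i. i + 1) ` J"
  define \<Phi>' where "\<Phi>' u = (\<forall>i\<in>J. u (i + 1) \<in> A i)" for u :: "int \<Rightarrow> 'a"
  have fJ': "finite J'" using J by (simp add: J'_def)
  have Z: "prod_emb UNIV (\<lambda>_. borel) J (Pi\<^sub>E J A) = {y. \<Phi> (restrict y J)}"
    by (auto simp: prod_emb_def space_PiM \<Phi>_def PiE_iff)
  have Z': "sh -` {y. \<Phi> (restrict y J)} \<inter> space M0 = {y. \<Phi>' (restrict y J')}"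
    by (auto simp: space_M0 sh_def \<Phi>_def \<Phi>'_def J'_def)
  have e1: "emeasure (distr M0 M0 sh) {y. \<Phi> (restrict y J)} = measure M0 {y. \<Phi>' (restrict y J')}"
    using meas_M0[OF J(1), of \<Phi>] Z'
    by (simp add: emeasure_distr[OF sh_meas] emeasure_eq_measure)
  have e2: "emeasure M0 {y. \<Phi> (restrict y J)} = measure M0 {y. \<Phi> (restrict y J)}"
    by (simp add: emeasure_eq_measure)
  have l1: "(\<lambda>n. freq (r n) (\<lambda>y. \<Phi>' (restrict y J'))) \<longlonglongrightarrow> measure M0 {y. \<Phi>' (restrict y J')}"
    by (rule M0_lim[OF fJ'])
  have l2: "(\<lambda>n. freq (r n) (\<lambda>y. \<Phi> (restrict y J))) \<longlonglongrightarrow> measure M0 {y. \<Phi> (restrict y J)}"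
    by (rule M0_lim[OF J(1)])
  have same: "\<And>y. \<Phi>' (restrict y J') = \<Phi> (restrict (sh y) J)"
    by (auto simp: \<Phi>_def \<Phi>'_def J'_def sh_def)
  have d: "(\<lambda>n. freq (r n) (\<lambda>y. \<Phi>' (restrict y J')) - freq (r n) (\<lambda>y. \<Phi> (restrict y J))) \<longlonglongrightarrow> 0"
  proof (rule Lim_null_comparison[OF _ L_r_tendsto])
    show "\<forall>\<^sub>F n in sequentially. norm (freq (r n) (\<lambda>y. \<Phi>' (restrict y J')) - freq (r n) (\<lambda>y. \<Phi> (restrict y J))) \<le> 1 / real (L (r n))"
      unfolding same using freq_sh[of _ "\<lambda>y. \<Phi> (restrict y J)"] by simp
  qed
  have "measure M0 {y. \<Phi>' (restrict y J')} - measure M0 {y. \<Phi> (restrict y J)} = 0"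
    using LIMSEQ_unique[OF tendsto_diff[OF l1 l2] d] .
  then show "emeasure (distr M0 M0 sh) (prod_emb UNIV (\<lambda>_. borel) J (Pi\<^sub>E J A)) =
             emeasure M0 (prod_emb UNIV (\<lambda>_. borel) J (Pi\<^sub>E J A))"
    unfolding Z e1 e2 by simp
qed

lemma kb_main:
  "\<exists>M r. prob_space M \<and> sets M = sets (PiM UNIV (\<lambda>_. borel)) \<and> strict_mono r \<and> distr M M sh = M \<and>
     (\<forall>J \<Phi>. finite J \<longrightarrow> (\<lambda>n. freq (r n) (\<lambda>y. \<Phi> (restrict y J))) \<longlonglongrightarrow> measure M {y. \<Phi> (restrict y J)})"
  using M0_prob sets_M0 r_props(1) M0_shift M0_lim by blast

end

lemma shift_pow: "(shift ^^ t) x = (\<lambda>j. x (j + int t))"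
  by (induction t arbitrary: x) (auto simp: shift_def funpow_Suc_right algebra_simps)

lemma shift_pow_S: assumes "x \<in> SFT N T" shows "(shift ^^ t) x \<in> SFT N T"
proof -
  have h: "\<forall>j. x j \<in> {1..N} \<and> T (x j) (x (j+1))" using assms by (simp add: SFT_def)
  { fix j
    have "x (j+int t) \<in> {1..N} \<and> T (x (j+int t)) (x (j+int t+1))" using h by blast
    hence "x (j+int t) \<in> {1..N} \<and> T (x (j+int t)) (x (j+1+int t))" by (simp add: algebra_simps) }
  thus ?thesis by (simp add: SFT_def shift_pow)
qed

lemma shift_S: "x \<in> SFT N T \<Longrightarrow> shift x \<in> SFT N T"
  using shift_pow_S[of x N T 1] by simp

lemma ret_enat:
  assumes "ret D y = enat r"
  shows "r \<ge> 1 \<and> (shift ^^ r) y \<in> D"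
proof -
  have ex: "\<exists>n\<ge>1. (shift ^^ n) y \<in> D" using assms unfolding ret_def by (auto split: if_splits)
  then have "r = (LEAST n. n \<ge> 1 \<and> (shift ^^ n) y \<in> D)" using assms unfolding ret_def by auto
  then show ?thesis using LeastI_ex[of "\<lambda>n. n \<ge> 1 \<and> (shift ^^ n) y \<in> D"] ex by auto
qed

lemma ret_iter_card:
  "ret_iter D n x = enat k \<Longrightarrow> n \<le> card {t\<in>{1..k}. (shift ^^ t) x \<in> D}"
proof (induction n arbitrary: k)
  case 0 then show ?case by simp
next
  case (Suc n)
  obtain k0 where k0: "ret_iter D n x = enat k0"
    using Suc.prems by (cases "ret_iter D n x") auto
  then have eq: "enat k = enat k0 + ret D ((shift ^^ k0) x)" using Suc.prems by simp
  then obtain r where r: "ret D ((shift ^^ k0) x) = enat r"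
    by (cases "ret D ((shift ^^ k0) x)") auto
  with eq have kk: "k = k0 + r" by simp
  from ret_enat[OF r] have r1: "r \<ge> 1" and inD: "(shift ^^ (r + k0)) x \<in> D"
    by (auto simp: funpow_add)
  have IH: "n \<le> card {t\<in>{1..k0}. (shift ^^ t) x \<in> D}" using Suc.IH[OF k0] .
  have sub: "insert k {t\<in>{1..k0}. (shift ^^ t) x \<in> D} \<subseteq> {t\<in>{1..k}. (shift ^^ t) x \<in> D}"
    using kk r1 inD by (auto simp: add.commute)
  have "card (insert k {t\<in>{1..k0}. (shift ^^ t) x \<in> D}) = Suc (card {t\<in>{1..k0}. (shift ^^ t) x \<in> D})"
    using kk r1 by (subst card_insert_disjoint) auto
  moreover have "card (insert k {t\<in>{1..k0}. (shift ^^ t) x \<in> D}) \<le> card {t\<in>{1..k}. (shift ^^ t) x \<in> D}"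
    by (rule card_mono[OF _ sub]) auto
  ultimately show ?case using IH by simp
qed

lemma cyl_self: "y \<in> S \<Longrightarrow> y \<in> cyl S m y" by (simp add: cyl_def)

lemma cyl_eq: "y \<in> cyl S m x \<Longrightarrow> cyl S m y = cyl S m x"
  by (auto simp: cyl_def)

lemma outer_iff: "y \<in> outer_cyl S A m \<longleftrightarrow> y \<in> S \<and> cyl S m y \<inter> A \<noteq> {}"
proof
  assume "y \<in> outer_cyl S A m"
  then obtain x where x: "x \<in> S" "cyl S m x \<inter> A \<noteq> {}" "y \<in> cyl S m x"
    unfolding outer_cyl_def by blast
  have "cyl S m y = cyl S m x" by (rule cyl_eq[OF x(3)])
  moreover have "y \<in> S" using x(3) by (simp add: cyl_def)
  ultimately show "y \<in> S \<and> cyl S m y \<inter> A \<noteq> {}" using x(2) by simp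
next
  assume "y \<in> S \<and> cyl S m y \<inter> A \<noteq> {}"
  then show "y \<in> outer_cyl S A m" unfolding outer_cyl_def using cyl_self[of y S m] by blast
qed

lemma inner_iff: "y \<in> inner_cyl S A m \<longleftrightarrow> y \<in> S \<and> cyl S m y \<subseteq> A"
proof
  assume "y \<in> inner_cyl S A m"
  then obtain x where x: "x \<in> S" "cyl S m x \<subseteq> A" "y \<in> cyl S m x"
    unfolding inner_cyl_def by blast
  have "cyl S m y = cyl S m x" by (rule cyl_eq[OF x(3)])
  moreover have "y \<in> S" using x(3) by (simp add: cyl_def)
  ultimately show "y \<in> S \<and> cyl S m y \<subseteq> A" using x(2) by simp
next
  assume "y \<in> S \<and> cyl S m y \<subseteq> A"
  then show "y \<in> inner_cyl S A m" unfolding inner_cyl_def using cyl_self[of y S m] by blast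
qed

lemma diff_iff: "y \<in> diff_cyl S A m \<longleftrightarrow> y \<in> S \<and> cyl S m y \<inter> A \<noteq> {} \<and> \<not> cyl S m y \<subseteq> A"
  by (auto simp: diff_cyl_def outer_iff inner_iff)

lemma cyl_mono: "k \<le> m \<Longrightarrow> cyl S m y \<subseteq> cyl S k y"
  by (auto simp: cyl_def)

lemma D_mono: assumes "k \<le> m" shows "diff_cyl S A m \<subseteq> diff_cyl S A k"
proof
  fix y assume "y \<in> diff_cyl S A m"
  with cyl_mono[OF assms, of S y] show "y \<in> diff_cyl S A k" unfolding diff_iff by blast
qed

lemma cyl_window: "\<forall>j. \<bar>j\<bar> \<le> int m \<longrightarrow> y j = y' j \<Longrightarrow> cyl S m y = cyl S m y'"
  by (auto simp: cyl_def)

lemma D_window: "y \<in> S \<Longrightarrow> y' \<in> S \<Longrightarrow> \<forall>j. \<bar>j\<bar> \<le> int m \<longrightarrow> y j = y' j \<Longrightarrow>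
   y \<in> diff_cyl S A m \<longleftrightarrow> y' \<in> diff_cyl S A m"
  unfolding diff_iff using cyl_window[of m y y' S] by simp

lemma closure_cyl:
  fixes y :: seq
  assumes "\<forall>k::nat. \<exists>a\<in>X. \<forall>j. \<bar>j\<bar> \<le> int k \<longrightarrow> a j = y j"
  shows "y \<in> closure X"
  unfolding closure_iff_nhds_not_empty
proof (intro allI impI)
  fix B U assume UB: "U \<subseteq> B" and oU: "open U" and yU: "y \<in> U"
  from oU have "openin (product_topology (\<lambda>i. euclidean) UNIV) U" by (simp add: open_fun_def)
  from product_topology_open_contains_basis[OF this yU] obtain Z where
    Z: "y \<in> Pi\<^sub>E UNIV Z" "finite {i. Z i \<noteq> topspace euclidean}" "Pi\<^sub>E UNIV Z \<subseteq> U"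
    by blast
  define F where "F = {i. Z i \<noteq> UNIV}"
  have fF: "finite F" using Z(2) by (simp add: F_def)
  define k where "k = nat (Max (insert 0 (abs ` F)))"
  have kF: "i \<in> F \<Longrightarrow> \<bar>i\<bar> \<le> int k" for i
  proof -
    assume "i \<in> F"
    then have "\<bar>i\<bar> \<le> Max (insert 0 (abs ` F))" using fF by (intro Max_ge) auto
    moreover have "0 \<le> Max (insert 0 (abs ` F))" using fF by (intro Max_ge) auto
    ultimately show ?thesis unfolding k_def by simp
  qed
  obtain a where a: "a \<in> X" "\<forall>j. \<bar>j\<bar> \<le> int k \<longrightarrow> a j = y j" using assms by blast
  have "a \<in> Pi\<^sub>E UNIV Z"
  proof -
    { fix i
      have "a i \<in> Z i"
      proof (cases "i \<in> F")
        case True then show ?thesis using a(2) kF Z(1) by (auto simp: PiE_iff)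
      next
        case False then show ?thesis by (simp add: F_def)
      qed }
    then show ?thesis by (simp add: PiE_iff)
  qed
  then show "X \<inter> B \<noteq> {}" using a(1) Z(3) UB by blast
qed

lemma S_closed: "closed (SFT N T)"
  unfolding closed_def
proof (subst open_subopen, intro ballI)
  fix x assume "x \<in> - SFT N T"
  then obtain j where j: "\<not> (x j \<in> {1..N} \<and> T (x j) (x (j + 1)))"
    by (auto simp: SFT_def)
  define U where "U = {f::seq. \<forall>i\<in>{j, j+1}. f (id i) \<in> {x i}}"
  have "open U" unfolding U_def by (rule product_topology_basis') (auto intro: discrete_topology_class.open_discrete)
  moreover have "x \<in> U" by (simp add: U_def)
  moreover have "U \<subseteq> - SFT N T"
  proof
    fix f assume "f \<in> U"
    then have "f j = x j" "f (j+1) = x (j+1)" by (auto simp: U_def)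
    then show "f \<in> - SFT N T" using j unfolding SFT_def by (metis (mono_tags, lifting) ComplI mem_Collect_eq)
  qed
  ultimately show "\<exists>T'. open T' \<and> x \<in> T' \<and> T' \<subseteq> - SFT N T" by blast
qed

lemma D_Inter_boundary:
  assumes "y \<in> (\<Inter>k. diff_cyl S A k)"
  shows "y \<in> closure A \<inter> closure (S - A)"
proof
  have d: "\<And>k. y \<in> S \<and> cyl S k y \<inter> A \<noteq> {} \<and> \<not> cyl S k y \<subseteq> A" using assms diff_iff by blast
  show "y \<in> closure A"
  proof (rule closure_cyl, intro allI)
    fix k obtain a where "a \<in> cyl S k y" "a \<in> A" using d[of k] by blast
    then show "\<exists>a\<in>A. \<forall>j. \<bar>j\<bar> \<le> int k \<longrightarrow> a j = y j" by (auto simp: cyl_def)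
  qed
  show "y \<in> closure (S - A)"
  proof (rule closure_cyl, intro allI)
    fix k obtain a where "a \<in> cyl S k y" "a \<notin> A" using d[of k] by blast
    then show "\<exists>a\<in>S - A. \<forall>j. \<bar>j\<bar> \<le> int k \<longrightarrow> a j = y j" by (auto simp: cyl_def)
  qed
qed

definition dd :: "(int \<Rightarrow> nat discrete) \<Rightarrow> seq" where
  "dd z = (\<lambda>i. of_discrete (z i))"

lemma of_discrete_meas: "of_discrete \<in> measurable (borel :: nat discrete measure) (borel :: nat measure)"
  by (rule measurableI) (auto intro: borel_open Discrete_Topology.open_discrete)

lemma dd_comp_meas: "(\<lambda>z. of_discrete (z i)) \<in> measurable (PiM UNIV (\<lambda>_. borel :: nat discrete measure)) (borel :: nat measure)"
  by (rule measurable_compose[OF measurable_component_singleton[of i] of_discrete_meas]) simp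

lemma dd_meas: "dd \<in> measurable (PiM UNIV (\<lambda>_. borel :: nat discrete measure)) (PiM UNIV (\<lambda>_. borel :: nat measure))"
  unfolding dd_def
  by (rule measurable_PiM_single') (auto simp: space_PiM intro: dd_comp_meas)

lemma shift_meas: "shift \<in> measurable (PiM UNIV (\<lambda>_. borel :: nat measure)) (PiM UNIV (\<lambda>_. borel :: nat measure))"
  unfolding shift_def by (rule measurable_PiM_single') (auto simp: space_PiM)

lemma sh_meas': "sh \<in> measurable (PiM UNIV (\<lambda>_. borel :: nat discrete measure)) (PiM UNIV (\<lambda>_. borel :: nat discrete measure))"
  unfolding sh_def by (rule measurable_PiM_single') (auto simp: space_PiM)

lemma dd_sh: "dd (sh z) = shift (dd z)"
  by (simp add: dd_def sh_def shift_def)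

lemma restrict_dd: "restrict (\<lambda>i. of_discrete (restrict z J i)) J = restrict (dd z) J"
  by (auto simp: dd_def restrict_def)

lemma space_seq: "space (PiM UNIV (\<lambda>_. borel :: nat measure)) = UNIV"
  by (simp add: space_PiM)

lemma inv_measure_exists:
  fixes x :: "nat \<Rightarrow> seq" and L :: "nat \<Rightarrow> nat"
  assumes xS: "\<And>j. x j \<in> SFT N T" and L1: "\<And>j. 1 \<le> L j" and Lj: "\<And>j. j \<le> L j"
  shows "\<exists>\<nu> r. strict_mono r \<and> invariant_prob (SFT N T) \<nu> \<and>
    (\<forall>J \<Phi>. finite J \<longrightarrow> {y\<in>SFT N T. \<Phi> (restrict y J)} \<in> sets \<nu> \<and>
      (\<lambda>n. real (card {t\<in>{1..L (r n)}. \<Phi> (restrict ((shift ^^ t) (x (r n))) J)}) / real (L (r n)))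
        \<longlonglongrightarrow> measure \<nu> {y\<in>SFT N T. \<Phi> (restrict y J)})"
proof -
  define S where "S = SFT N T"
  interpret K: kb "discrete ` {1..N}" "\<lambda>j i. discrete (x j i)" L
  proof
    show "finite (discrete ` {1..N})" by simp
    show "\<And>j i. discrete (x j i) \<in> discrete ` {1..N}" using xS by (auto simp: SFT_def)
  qed (use L1 Lj in auto)
  obtain M r where M: "prob_space M" "sets M = sets (PiM UNIV (\<lambda>_. borel))" "strict_mono r"
    "distr M M sh = M"
    and Mlim: "\<And>J \<Phi>. finite J \<Longrightarrow> (\<lambda>n. K.freq (r n) (\<lambda>y. \<Phi> (restrict y J))) \<longlonglongrightarrow> measure M {y. \<Phi> (restrict y J)}"
    using K.kb_main by blast
  have ddM: "dd \<in> measurable M (PiM UNIV (\<lambda>_. borel :: nat measure))"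
    using dd_meas by (simp add: measurable_cong_sets[OF M(2) refl])
  define \<nu>0 where "\<nu>0 = distr M (PiM UNIV (\<lambda>_. borel :: nat measure)) dd"
  interpret N0: prob_space \<nu>0 unfolding \<nu>0_def by (rule prob_space.prob_space_distr[OF M(1) ddM])
  have sets\<nu>0: "sets \<nu>0 = sets (PiM UNIV (\<lambda>_. borel :: nat measure))" by (simp add: \<nu>0_def)
  have space\<nu>0: "space \<nu>0 = UNIV" by (simp add: \<nu>0_def space_PiM)
  have meas\<nu>0: "finite J \<Longrightarrow> {y. \<Phi> (restrict y J)} \<in> sets \<nu>0" for J \<Phi>
    unfolding sets\<nu>0 by (rule meas_restrict)
  have lim0: "(\<lambda>n. real (card {t\<in>{1..L (r n)}. \<Phi> (restrict ((shift ^^ t) (x (r n))) J)}) / real (L (r n)))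
        \<longlonglongrightarrow> measure \<nu>0 {y. \<Phi> (restrict y J)}" if J: "finite J" for J \<Phi>
  proof -
    define \<Phi>' where "\<Phi>' u = \<Phi> (restrict (\<lambda>i. of_discrete (u i)) J)" for u :: "int \<Rightarrow> nat discrete"
    have "measure \<nu>0 {y. \<Phi> (restrict y J)} = measure M (dd -` {y. \<Phi> (restrict y J)} \<inter> space M)"
      unfolding \<nu>0_def using meas\<nu>0[OF J] sets\<nu>0 by (intro measure_distr[OF ddM]) auto
    also have "dd -` {y. \<Phi> (restrict y J)} \<inter> space M = {z. \<Phi>' (restrict z J)}"
    proof -
      have "\<And>z. \<Phi>' (restrict z J) = \<Phi> (restrict (dd z) J)"
        unfolding \<Phi>'_def by (rule arg_cong[where f=\<Phi>], rule restrict_dd)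
      then show ?thesis using sets_eq_imp_space_eq[OF M(2)] by (auto simp: space_PiM)
    qed
    finally have eqm: "measure \<nu>0 {y. \<Phi> (restrict y J)} = measure M {z. \<Phi>' (restrict z J)}" .
    have "K.freq n (\<lambda>y. \<Phi>' (restrict y J)) =
      real (card {t\<in>{1..L n}. \<Phi> (restrict ((shift ^^ t) (x n)) J)}) / real (L n)" for n
    proof -
      have "\<And>t. \<Phi>' (restrict (\<lambda>i. discrete (x n (i + int t))) J) = \<Phi> (restrict ((shift ^^ t) (x n)) J)"
        unfolding \<Phi>'_def shift_pow by (intro arg_cong[where f=\<Phi>] ext) (auto simp: discrete_inverse)
      then show ?thesis unfolding K.freq_def by simp
    qed
    then show ?thesis using Mlim[OF J, of \<Phi>'] eqm by simp
  qed
  have S_meas: "S \<in> sets \<nu>0"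
  proof -
    define \<Psi> where "\<Psi> i u = (u i \<in> {1..N} \<and> T (u i) (u (i+1)))" for i and u :: seq
    have Gi: "{y. \<Psi> i (restrict y {i, i+1})} \<in> sets \<nu>0" for i by (rule meas\<nu>0) simp
    have "S = (\<Inter>i. {y. \<Psi> i (restrict y {i, i+1})})"
      by (auto simp: S_def SFT_def \<Psi>_def)
    also have "\<dots> \<in> sets \<nu>0"
      by (rule sets.countable_INT) (use Gi in auto)
    finally show ?thesis .
  qed
  have AE_S: "AE y in \<nu>0. y \<in> S"
  proof -
    have "AE y in \<nu>0. y i \<in> {1..N} \<and> T (y i) (y (i+1))" for i
    proof -
      define \<Phi> where "\<Phi> u = (u i \<in> {1..N} \<and> T (u i) (u (i+1)))" for u :: seq
      have l: "(\<lambda>n. real (card {t\<in>{1..L (r n)}. \<Phi> (restrict ((shift ^^ t) (x (r n))) {i,i+1})}) / real (L (r n)))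
        \<longlonglongrightarrow> measure \<nu>0 {y. \<Phi> (restrict y {i,i+1})}" by (rule lim0) simp
      have "\<And>n t. \<Phi> (restrict ((shift ^^ t) (x (r n))) {i,i+1})"
        using shift_pow_S[OF xS] unfolding \<Phi>_def SFT_def by auto
      then have "\<And>n. {t\<in>{1..L (r n)}. \<Phi> (restrict ((shift ^^ t) (x (r n))) {i,i+1})} = {1..L (r n)}"
        by auto
      then have "\<And>n. real (card {t\<in>{1..L (r n)}. \<Phi> (restrict ((shift ^^ t) (x (r n))) {i,i+1})}) / real (L (r n)) = 1"
        using L1 by (simp add: Suc_le_eq)
      then have eq1: "(\<lambda>n. real (card {t\<in>{1..L (r n)}. \<Phi> (restrict ((shift ^^ t) (x (r n))) {i,i+1})}) / real (L (r n))) = (\<lambda>n. 1)"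
        by (rule ext)
      have "(\<lambda>n::nat. 1::real) \<longlonglongrightarrow> measure \<nu>0 {y. \<Phi> (restrict y {i,i+1})}"
        using l unfolding eq1 .
      then have "measure \<nu>0 {y. \<Phi> (restrict y {i,i+1})} = 1"
        using LIMSEQ_const_iff by metis
      then have "AE y in \<nu>0. y \<in> {y. \<Phi> (restrict y {i,i+1})}" by (rule N0.AE_prob_1)
      then show ?thesis by (simp add: \<Phi>_def)
    qed
    then have "AE y in \<nu>0. \<forall>i. y i \<in> {1..N} \<and> T (y i) (y (i+1))" by (simp add: AE_all_countable)
    then show ?thesis by (simp add: S_def SFT_def)
  qed
  have mS: "emeasure \<nu>0 S = 1"
    using N0.prob_Collect_eq_1[of "\<lambda>y. y \<in> S"] AE_S S_meas space\<nu>0 N0.emeasure_eq_measure by simp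
  have shiftM: "shift \<in> measurable \<nu>0 \<nu>0"
    using shift_meas by (simp add: measurable_cong_sets[OF sets\<nu>0 sets\<nu>0])
  have shM: "sh \<in> measurable M M"
    using sh_meas' by (simp add: measurable_cong_sets[OF M(2) M(2)])
  have inv0: "distr \<nu>0 \<nu>0 shift = \<nu>0"
  proof -
    have "distr \<nu>0 \<nu>0 shift = distr \<nu>0 (PiM UNIV (\<lambda>_. borel :: nat measure)) shift"
      by (rule distr_cong) (auto simp: sets\<nu>0)
    also have "\<dots> = distr M (PiM UNIV (\<lambda>_. borel :: nat measure)) (shift \<circ> dd)"
      unfolding \<nu>0_def by (rule distr_distr[OF shift_meas ddM])
    also have "shift \<circ> dd = dd \<circ> sh" by (auto simp: dd_sh)
    also have "distr M (PiM UNIV (\<lambda>_. borel :: nat measure)) (dd \<circ> sh) =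
       distr (distr M M sh) (PiM UNIV (\<lambda>_. borel :: nat measure)) dd"
      by (rule distr_distr[OF ddM shM, symmetric])
    also have "\<dots> = \<nu>0" unfolding M(4) \<nu>0_def ..
    finally show ?thesis .
  qed
  define \<nu> where "\<nu> = restrict_space \<nu>0 S"
  have space\<nu>: "space \<nu> = S" by (simp add: \<nu>_def space_restrict_space space\<nu>0)
  have sets\<nu>: "sets \<nu> = sets (restrict_space borel S)"
    unfolding \<nu>_def sets_restrict_space sets\<nu>0 sets_PiM_equal_borel ..
  have S\<nu>0: "S \<inter> space \<nu>0 \<in> sets \<nu>0" using S_meas space\<nu>0 by simp
  have em\<nu>: "A \<subseteq> S \<Longrightarrow> emeasure \<nu> A = emeasure \<nu>0 A" for A
    unfolding \<nu>_def by (rule emeasure_restrict_space[OF S\<nu>0])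
  have AEeq: "B \<in> sets \<nu>0 \<Longrightarrow> emeasure \<nu>0 (S \<inter> B) = emeasure \<nu>0 B" for B
    by (rule emeasure_eq_AE) (use AE_S S_meas in auto)
  have prob\<nu>: "prob_space \<nu>"
    unfolding \<nu>_def by (rule prob_space_restrict_space[OF S_meas mS])
  have invp: "invariant_prob S \<nu>"
    unfolding invariant_prob_def borel_prob_on_def
  proof (intro conjI prob\<nu> sets\<nu> ballI)
    fix B assume "B \<in> sets \<nu>"
    then obtain B' where B': "B' \<in> sets \<nu>0" "B = S \<inter> B'"
      unfolding \<nu>_def sets_restrict_space by auto
    have sB': "shift -` B' \<in> sets \<nu>0"
      using measurable_sets[OF shiftM B'(1)] space\<nu>0 by simp
    have e: "shift -` B \<inter> space \<nu> = S \<inter> shift -` B'"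
      unfolding space\<nu> B'(2) using shift_S[of _ N T] by (auto simp: S_def)
    have "emeasure \<nu> (shift -` B \<inter> space \<nu>) = emeasure \<nu>0 (S \<inter> shift -` B')"
      unfolding e by (rule em\<nu>) auto
    also have "\<dots> = emeasure \<nu>0 (shift -` B')" by (rule AEeq[OF sB'])
    also have "\<dots> = emeasure (distr \<nu>0 \<nu>0 shift) B'"
      using emeasure_distr[OF shiftM, of B'] B'(1) space\<nu>0 by (simp add: sets\<nu>0)
    also have "\<dots> = emeasure \<nu>0 B'" unfolding inv0 ..
    also have "\<dots> = emeasure \<nu>0 (S \<inter> B')" by (rule AEeq[OF B'(1), symmetric])
    also have "\<dots> = emeasure \<nu> B" unfolding B'(2) by (rule em\<nu>[symmetric]) auto
    finally show "emeasure \<nu> (shift -` B \<inter> space \<nu>) = emeasure \<nu> B" .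
  qed
  have props: "{y\<in>SFT N T. \<Phi> (restrict y J)} \<in> sets \<nu> \<and>
      (\<lambda>n. real (card {t\<in>{1..L (r n)}. \<Phi> (restrict ((shift ^^ t) (x (r n))) J)}) / real (L (r n)))
        \<longlonglongrightarrow> measure \<nu> {y\<in>SFT N T. \<Phi> (restrict y J)}" if J: "finite J" for J \<Phi>
  proof
    have eqS: "{y\<in>SFT N T. \<Phi> (restrict y J)} = S \<inter> {y. \<Phi> (restrict y J)}" by (auto simp: S_def)
    show "{y\<in>SFT N T. \<Phi> (restrict y J)} \<in> sets \<nu>"
      unfolding eqS \<nu>_def sets_restrict_space using meas\<nu>0[OF J] by auto
    have "emeasure \<nu> {y\<in>SFT N T. \<Phi> (restrict y J)} = emeasure \<nu>0 {y. \<Phi> (restrict y J)}"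
      unfolding eqS by (subst em\<nu>) (auto intro: AEeq meas\<nu>0[OF J])
    then have "measure \<nu> {y\<in>SFT N T. \<Phi> (restrict y J)} = measure \<nu>0 {y. \<Phi> (restrict y J)}"
      by (simp add: measure_def)
    then show "(\<lambda>n. real (card {t\<in>{1..L (r n)}. \<Phi> (restrict ((shift ^^ t) (x (r n))) J)}) / real (L (r n)))
        \<longlonglongrightarrow> measure \<nu> {y\<in>SFT N T. \<Phi> (restrict y J)}" using lim0[OF J] by simp
  qed
  show ?thesis using M(3) invp props unfolding S_def by blast
qed

lemma key_contra:
  fixes N :: nat and T :: "nat \<Rightarrow> nat \<Rightarrow> bool" and A :: "seq set" and v :: real
  assumes AS: "A \<subseteq> SFT N T" and v: "v > 0"
    and hyp: "\<forall>\<nu>. invariant_prob (SFT N T) \<nu> \<longrightarrow>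
           measure \<nu> (closure A \<inter> closure (SFT N T - A)) = 0"
  shows "\<exists>M. \<forall>m\<ge>M. \<exists>n0. \<forall>n\<ge>n0. \<forall>x\<in>SFT N T. \<forall>k.
           ret_iter (diff_cyl (SFT N T) A m) n x = enat k \<longrightarrow> \<not> (real k / real n \<le> v)"
proof (rule ccontr)
  define S where "S = SFT N T"
  define D where "D m = diff_cyl S A m" for m
  assume "\<not> ?thesis"
  then have neg: "\<forall>M. \<exists>m\<ge>M. \<forall>n0. \<exists>n\<ge>n0. \<exists>x\<in>S. \<exists>k. ret_iter (D m) n x = enat k \<and> real k / real n \<le> v"
    unfolding S_def D_def by blast
  have "\<forall>j. \<exists>p::nat \<times> nat \<times> seq \<times> nat. fst p \<ge> j \<and> fst (snd p) \<ge> max j 1 \<and> fst (snd (snd p)) \<in> S \<and>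
        ret_iter (D (fst p)) (fst (snd p)) (fst (snd (snd p))) = enat (snd (snd (snd p))) \<and>
        real (snd (snd (snd p))) / real (fst (snd p)) \<le> v"
  proof
    fix j
    obtain m where m: "m \<ge> j" "\<forall>n0. \<exists>n\<ge>n0. \<exists>x\<in>S. \<exists>k. ret_iter (D m) n x = enat k \<and> real k / real n \<le> v"
      using neg by blast
    then obtain n x k where "n \<ge> max j 1" "x \<in> S" "ret_iter (D m) n x = enat k" "real k / real n \<le> v"
      by blast
    then show "\<exists>p::nat \<times> nat \<times> seq \<times> nat. fst p \<ge> j \<and> fst (snd p) \<ge> max j 1 \<and> fst (snd (snd p)) \<in> S \<and>
        ret_iter (D (fst p)) (fst (snd p)) (fst (snd (snd p))) = enat (snd (snd (snd p))) \<and>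
        real (snd (snd (snd p))) / real (fst (snd p)) \<le> v"
      using m(1) by (intro exI[of _ "(m, n, x, k)"]) simp
  qed
  then obtain p where p: "\<And>j. fst (p j) \<ge> j \<and> fst (snd (p j)) \<ge> max j 1 \<and> fst (snd (snd (p j))) \<in> S \<and>
        ret_iter (D (fst (p j))) (fst (snd (p j))) (fst (snd (snd (p j)))) = enat (snd (snd (snd (p j)))) \<and>
        real (snd (snd (snd (p j)))) / real (fst (snd (p j))) \<le> v"
    by metis
  define mm where "mm j = fst (p j)" for j
  define nn where "nn j = fst (snd (p j))" for j
  define xx where "xx j = fst (snd (snd (p j)))" for j
  define kk where "kk j = snd (snd (snd (p j)))" for j
  have mm: "mm j \<ge> j" and nn: "nn j \<ge> max j 1" and xx: "xx j \<in> S"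
    and rt: "ret_iter (D (mm j)) (nn j) (xx j) = enat (kk j)" and kv: "real (kk j) / real (nn j) \<le> v" for j
    using p[of j] unfolding mm_def nn_def xx_def kk_def by auto
  define cnt where "cnt j m = card {t\<in>{1..kk j}. (shift ^^ t) (xx j) \<in> D m}" for j m
  have cnt_ge: "nn j \<le> cnt j (mm j)" for j
    unfolding cnt_def by (rule ret_iter_card[OF rt])
  have cnt_le: "cnt j m \<le> kk j" for j m
  proof -
    have "cnt j m \<le> card {1..kk j}" unfolding cnt_def by (intro card_mono) auto
    then show ?thesis by simp
  qed
  have kk_ge: "kk j \<ge> j" "kk j \<ge> 1" for j
    using cnt_ge[of j] cnt_le[of j "mm j"] nn[of j] by auto
  obtain \<nu> r where r: "strict_mono r" and inv: "invariant_prob S \<nu>"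
    and lim: "\<And>J \<Phi>. finite J \<Longrightarrow> {y\<in>S. \<Phi> (restrict y J)} \<in> sets \<nu> \<and>
      (\<lambda>n. real (card {t\<in>{1..kk (r n)}. \<Phi> (restrict ((shift ^^ t) (xx (r n))) J)}) / real (kk (r n)))
        \<longlonglongrightarrow> measure \<nu> {y\<in>S. \<Phi> (restrict y J)}"
    using inv_measure_exists[of xx N T kk] xx kk_ge unfolding S_def by blast
  have prob: "prob_space \<nu>" using inv by (simp add: invariant_prob_def borel_prob_on_def)
  have sets\<nu>: "sets \<nu> = sets (restrict_space borel S)" using inv by (simp add: invariant_prob_def borel_prob_on_def)
  have DS: "D m \<subseteq> S" for m by (auto simp: D_def diff_iff)
  have Dk: "D k \<in> sets \<nu> \<and> measure \<nu> (D k) \<ge> 1 / v" for k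
  proof -
    define J where "J = {- int k..int k}"
    define \<Phi> where "\<Phi> u = (\<exists>y\<in>D k. restrict y J = u)" for u
    have fJ: "finite J" by (simp add: J_def)
    have win: "y \<in> S \<Longrightarrow> \<Phi> (restrict y J) \<longleftrightarrow> y \<in> D k" for y
    proof
      assume yS: "y \<in> S" and "\<Phi> (restrict y J)"
      then obtain y' where y': "y' \<in> D k" "restrict y' J = restrict y J" by (auto simp: \<Phi>_def)
      have "\<forall>j. \<bar>j\<bar> \<le> int k \<longrightarrow> y' j = y j"
      proof (intro allI impI)
        fix j assume "\<bar>j\<bar> \<le> int k"
        then have "j \<in> J" by (auto simp: J_def)
        then show "y' j = y j" using y'(2) by (metis restrict_apply')
      qed
      then show "y \<in> D k" using D_window[OF _ yS, of y' k A] y'(1) DS[of k] unfolding D_def by auto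
    qed (auto simp: \<Phi>_def)
    have set_eq: "{y\<in>S. \<Phi> (restrict y J)} = D k" using win DS[of k] by auto
    from lim[OF fJ, of \<Phi>] have Dm: "D k \<in> sets \<nu>"
      and l: "(\<lambda>n. real (card {t\<in>{1..kk (r n)}. \<Phi> (restrict ((shift ^^ t) (xx (r n))) J)}) / real (kk (r n)))
        \<longlonglongrightarrow> measure \<nu> (D k)" unfolding set_eq by auto
    have "1 / v \<le> real (card {t\<in>{1..kk (r n)}. \<Phi> (restrict ((shift ^^ t) (xx (r n))) J)}) / real (kk (r n))"
      if n: "n \<ge> k" for n
    proof -
      have "k \<le> mm (r n)" using n seq_suble[OF r, of n] mm[of "r n"] by linarith
      then have sub: "D (mm (r n)) \<subseteq> D k" unfolding D_def by (rule D_mono)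
      have "{t\<in>{1..kk (r n)}. (shift ^^ t) (xx (r n)) \<in> D (mm (r n))} \<subseteq>
            {t\<in>{1..kk (r n)}. \<Phi> (restrict ((shift ^^ t) (xx (r n))) J)}"
        using sub win shift_pow_S[of "xx (r n)" N T] xx[of "r n"] unfolding S_def by auto
      then have "cnt (r n) (mm (r n)) \<le> card {t\<in>{1..kk (r n)}. \<Phi> (restrict ((shift ^^ t) (xx (r n))) J)}"
        unfolding cnt_def by (intro card_mono) auto
      then have c: "real (nn (r n)) \<le> real (card {t\<in>{1..kk (r n)}. \<Phi> (restrict ((shift ^^ t) (xx (r n))) J)})"
        using cnt_ge[of "r n"] by linarith
      have nnpos: "real (nn (r n)) > 0" using nn[of "r n"] by simp
      have kkpos: "real (kk (r n)) > 0" using kk_ge(2)[of "r n"] by simp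
      have "real (kk (r n)) \<le> v * real (nn (r n))" using kv[of "r n"] nnpos by (simp add: divide_le_eq)
      then have "1 / v \<le> real (nn (r n)) / real (kk (r n))"
        using v kkpos nnpos by (simp add: divide_simps mult.commute)
      also have "\<dots> \<le> real (card {t\<in>{1..kk (r n)}. \<Phi> (restrict ((shift ^^ t) (xx (r n))) J)}) / real (kk (r n))"
        using c kkpos by (simp add: divide_right_mono)
      finally show ?thesis .
    qed
    then have "1 / v \<le> measure \<nu> (D k)" by (intro LIMSEQ_le_const[OF l]) auto
    then show ?thesis using Dm by simp
  qed
  interpret prob_space \<nu> by (rule prob)
  have dec: "decseq D" unfolding decseq_def D_def using D_mono by blast
  have "(\<lambda>k. measure \<nu> (D k)) \<longlonglongrightarrow> measure \<nu> (\<Inter>k. D k)"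
    by (rule finite_Lim_measure_decseq) (use Dk dec in auto)
  then have I: "1 / v \<le> measure \<nu> (\<Inter>k. D k)"
    by (intro LIMSEQ_le_const) (use Dk in auto)
  define B where "B = closure A \<inter> closure (S - A)"
  have BI: "(\<Inter>k. D k) \<subseteq> B" unfolding B_def D_def using D_Inter_boundary by blast
  have BS: "B \<subseteq> S"
    unfolding B_def S_def using closure_minimal[OF AS S_closed] by auto
  have "closed B" unfolding B_def by (intro closed_Int closed_closure)
  then have "B \<in> sets borel" by (rule borel_closed)
  then have Bm: "B \<in> sets \<nu>" unfolding sets\<nu> sets_restrict_space using BS by auto
  have Im: "(\<Inter>k. D k) \<in> sets \<nu>" using Dk by auto
  have "measure \<nu> (\<Inter>k. D k) \<le> measure \<nu> B"
    by (rule finite_measure_mono[OF BI Bm])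
  moreover have "measure \<nu> B = 0" using hyp inv unfolding B_def S_def by blast
  ultimately show False using I v by (smt (verit) divide_pos_pos)
qed

theorem proposition6p2:
  fixes N :: nat and T :: "nat \<Rightarrow> nat \<Rightarrow> bool" and \<phi> :: "seq \<Rightarrow> real"
    and \<mu> :: "seq measure" and A :: "seq set"
  assumes "N \<ge> 1"
    and "mixing_matrix N T"
    and "holder_on (SFT N T) \<phi>"
    and "equilibrium_state (SFT N T) \<phi> \<mu>"
    and "\<forall>\<nu>. equilibrium_state (SFT N T) \<phi> \<nu> \<longrightarrow> \<nu> = \<mu>"
    and "A \<subseteq> SFT N T" and "openin (top_of_set (SFT N T)) A"
    and "\<forall>\<nu>. invariant_prob (SFT N T) \<nu> \<longrightarrow>
           measure \<nu> (closure A \<inter> closure (SFT N T - A)) = 0"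
  shows "\<forall>v>0. \<exists>M. \<forall>m\<ge>M.
           (log_rate \<mu> (diff_cyl (SFT N T) A m) v \<longlongrightarrow> -\<infinity>) sequentially"
proof (intro allI impI)
  fix v :: real assume v: "v > 0"
  obtain M where M: "\<forall>m\<ge>M. \<exists>n0. \<forall>n\<ge>n0. \<forall>x\<in>SFT N T. \<forall>k.
           ret_iter (diff_cyl (SFT N T) A m) n x = enat k \<longrightarrow> \<not> (real k / real n \<le> v)"
    using key_contra[OF assms(6) v assms(8)] by blast
  have sp: "space \<mu> = SFT N T"
  proof -
    have "sets \<mu> = sets (restrict_space borel (SFT N T))"
      using assms(4) by (simp add: equilibrium_state_def invariant_prob_def borel_prob_on_def)
    then have "space \<mu> = space (restrict_space borel (SFT N T))" by (rule sets_eq_imp_space_eq)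
    then show ?thesis by (simp add: space_restrict_space)
  qed
  show "\<exists>M. \<forall>m\<ge>M. (log_rate \<mu> (diff_cyl (SFT N T) A m) v \<longlongrightarrow> -\<infinity>) sequentially"
  proof (intro exI allI impI)
    fix m assume "m \<ge> M"
    then obtain n0 where n0: "\<forall>n\<ge>n0. \<forall>x\<in>SFT N T. \<forall>k.
           ret_iter (diff_cyl (SFT N T) A m) n x = enat k \<longrightarrow> \<not> (real k / real n \<le> v)"
      using M by blast
    have "eventually (\<lambda>n. log_rate \<mu> (diff_cyl (SFT N T) A m) v n = -\<infinity>) sequentially"
      unfolding eventually_sequentially
    proof (intro exI allI impI)
      fix n assume "n \<ge> n0"
      then have E: "{x\<in>space \<mu>. \<exists>k. ret_iter (diff_cyl (SFT N T) A m) n x = enat k \<and> real k / real n \<le> v} = {}"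
        using n0 sp by auto
      show "log_rate \<mu> (diff_cyl (SFT N T) A m) v n = -\<infinity>"
        unfolding log_rate_def Let_def E by simp
    qed
    then show "(log_rate \<mu> (diff_cyl (SFT N T) A m) v \<longlongrightarrow> -\<infinity>) sequentially"
      by (rule tendsto_eventually)
  qed
qed

end
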